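(* Let $\alpha\in(0,1)$ be irrational, and for $k\ge1$ write the $k$-th matrix of the Minkowski chain of $\alpha$ (case $n=1$) as $$B_k=\begin{pmatrix} q & -p\\ q' & -p'\end{pmatrix}.$$ Then the $k$-th pair in the Hurwitz chain of $\alpha$ is either $(\tfrac{p}{q},\tfrac{p'}{q'})$ or $(\tfrac{p'}{q'},\tfrac{p}{q})$.
   Context: Farey sets: for $m\in\mathbb{Z}^+$, $\mathcal{F}_m$ is the set of rationals in $[0,1]$ (in lowest terms) with denominator at most $m$, in increasing order. Hurwitz chain: for each $m$ let $(\tfrac{p}{q},\tfrac{p'}{q'})$ be the unique pair of successive elements of $\mathcal{F}_m$ with $\tfrac pq<\alpha<\tfrac{p'}{q'}$; the Hurwitz chain of $\alpha$ is the sequence of distinct such pairs as $m=1,2,3,\dots$, in order of appearance (first pair $(\tfrac01,\tfrac11)$). Minkowski chain (general definition, here used with $n=1$, $\alpha_1=\alpha$): Let $n\ge1$, $\ell=n+1$, $(\alpha_1,\dots,\alpha_n)\in\mathbb{R}^n$ with $\alpha_1,\dots,\alpha_n,1$ linearly independent over $\mathbb{Q}$. For $r=(r_1,\dots,r_\ell)\in\mathbb{Z}^\ell$ put $\xi(r)=r_1\alpha_1+\cdots+r_n\alpha_n+r_\ell$. For a real matrix or vector, $\|\cdot\|_\infty$ is the maximum absolute value of its entries. For $m\in\mathbb{Z}^+$, $A_m$ is the nonsingular integral $\ell\times\ell$ matrix with rows $w_1,\dots,w_\ell$ chosen successively: $w_i$ is the vector $w\in\mathbb{Z}^\ell$ with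 $\|w\|_\infty\le m$, linearly independent of $w_1,\dots,w_{i-1}$, minimizing $|\xi(w)|$, normalized so that its first nonzero entry is positive (this is unique by the linear independence hypothesis). Write $\beta_i=\xi(w_i)$, i.e. $A_m(\alpha_1,\dots,\alpha_n,1)^\top=(\beta_1,\dots,\beta_\ell)^\top$, so $0<|\beta_1|<\cdots<|\beta_\ell|$. The Minkowski chain $B_1,B_2,\dots$ is the sequence of distinct matrices among $A_1,A_2,A_3,\dots$ in order of appearance ($B_1=A_1$). *)

theory Defs
  imports Complex_Main "HOL-Library.Infinite_Set"
begin

definition new_indices :: "(nat \<Rightarrow> 'a) \<Rightarrow> nat set" where
  "new_indices f = {m. 1 \<le> m \<and> f m \<notin> f ` {1..<m}}"

definition distinct_chain :: "(nat \<Rightarrow> 'a) \<Rightarrow> nat \<Rightarrow> 'a" where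
  "distinct_chain f k = f (enumerate (new_indices f) (k - 1))"

definition farey :: "nat \<Rightarrow> rat set" where
  "farey m = {r. 0 \<le> r \<and> r \<le> 1 \<and> snd (quotient_of r) \<le> int m}"

definition hurwitz_pair :: "real \<Rightarrow> nat \<Rightarrow> rat \<times> rat" where
  "hurwitz_pair \<alpha> m = (THE (a, b). a \<in> farey m \<and> b \<in> farey m \<and>
      of_rat a < \<alpha> \<and> \<alpha> < of_rat b \<and> \<not> (\<exists>c \<in> farey m. a < c \<and> c < b))"

definition hurwitz_chain :: "real \<Rightarrow> nat \<Rightarrow> rat \<times> rat" where
  "hurwitz_chain \<alpha> = distinct_chain (hurwitz_pair \<alpha>)"

text \<open>Vectors of Z^2 are pairs (r1, r2); xi(r) = r1 * alpha + r2.
  A 2x2 integral matrix is represented by the pair of its rows (w1, w2).\<close>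

definition xi :: "real \<Rightarrow> int \<times> int \<Rightarrow> real" where
  "xi \<alpha> r = of_int (fst r) * \<alpha> + of_int (snd r)"

definition sup_norm_le :: "int \<times> int \<Rightarrow> nat \<Rightarrow> bool" where
  "sup_norm_le w m \<longleftrightarrow> \<bar>fst w\<bar> \<le> int m \<and> \<bar>snd w\<bar> \<le> int m"

definition first_nonzero_pos :: "int \<times> int \<Rightarrow> bool" where
  "first_nonzero_pos w \<longleftrightarrow> fst w > 0 \<or> (fst w = 0 \<and> snd w > 0)"

definition mink_min :: "real \<Rightarrow> nat \<Rightarrow> (int \<times> int \<Rightarrow> bool) \<Rightarrow> int \<times> int" where
  "mink_min \<alpha> m P = (THE w. P w \<and> sup_norm_le w m \<and> first_nonzero_pos w \<and>
      (\<forall>v. P v \<and> sup_norm_le v m \<longrightarrow> \<bar>xi \<alpha> w\<bar> \<le> \<bar>xi \<alpha> v\<bar>))"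

text \<open>Linear independence: {w} independent iff w \<noteq> 0; {w1, w} independent iff det \<noteq> 0.\<close>
definition mink_w1 :: "real \<Rightarrow> nat \<Rightarrow> int \<times> int" where
  "mink_w1 \<alpha> m = mink_min \<alpha> m (\<lambda>w. w \<noteq> (0, 0))"

definition mink_w2 :: "real \<Rightarrow> nat \<Rightarrow> int \<times> int" where
  "mink_w2 \<alpha> m = (let w1 = mink_w1 \<alpha> m in
      mink_min \<alpha> m (\<lambda>w. fst w1 * snd w - snd w1 * fst w \<noteq> 0))"

definition mink_A :: "real \<Rightarrow> nat \<Rightarrow> (int \<times> int) \<times> (int \<times> int)" where
  "mink_A \<alpha> m = (mink_w1 \<alpha> m, mink_w2 \<alpha> m)"

definition minkowski_chain :: "real \<Rightarrow> nat \<Rightarrow> (int \<times> int) \<times> (int \<times> int)" where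
  "minkowski_chain \<alpha> = distinct_chain (mink_A \<alpha>)"

end

theory Submission
  imports Defs
begin

definition good :: "real \<Rightarrow> nat \<Rightarrow> int \<Rightarrow> int \<Rightarrow> int \<Rightarrow> int \<Rightarrow> bool" where
  "good \<alpha> m a b c d \<longleftrightarrow> 1 \<le> b \<and> 1 \<le> d \<and> b \<le> int m \<and> d \<le> int m \<and> int m < b + d
     \<and> b * c - a * d = 1 \<and> 0 \<le> a \<and> a \<le> b \<and> 0 \<le> c \<and> c \<le> d
     \<and> of_int b * \<alpha> - of_int a > 0 \<and> of_int d * \<alpha> - of_int c < 0"

lemma irr_ne:
  assumes "\<alpha> \<notin> \<rat>" "(n::int) \<noteq> 0"
  shows "of_int n * \<alpha> \<noteq> of_int z"
proof
  assume "of_int n * \<alpha> = of_int z"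
  then have "\<alpha> = of_int z / of_int n" using assms(2) by (simp add: field_simps)
  then have "\<alpha> \<in> \<rat>" by simp
  with assms(1) show False by simp
qed

lemma good_ex:
  assumes "0 < \<alpha>" "\<alpha> < 1" "\<alpha> \<notin> \<rat>" "1 \<le> m"
  shows "\<exists>a b c d. good \<alpha> m a b c d"
  using assms(4)
proof (induction m rule: nat_induct_at_least)
  case base
  have "good \<alpha> 1 0 1 1 1" using assms by (simp add: good_def)
  then show ?case by blast
next
  case (Suc m)
  then obtain a b c d where g: "good \<alpha> m a b c d" by blast
  show ?case
  proof (cases "int (Suc m) < b + d")
    case True
    then have "good \<alpha> (Suc m) a b c d" using g by (auto simp: good_def)
    then show ?thesis by blast
  next
    case False
    then have bd: "b + d = int (Suc m)" using g by (auto simp: good_def)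
    have ne: "of_int (b + d) * \<alpha> \<noteq> of_int (a + c)"
      by (rule irr_ne) (use assms g in \<open>auto simp: good_def\<close>)
    show ?thesis
    proof (cases "of_int (b + d) * \<alpha> - of_int (a + c) < 0")
      case True
      have "b * (a + c) - a * (b + d) = 1" using g by (simp add: good_def algebra_simps)
      then have "good \<alpha> (Suc m) a b (a + c) (b + d)"
        using g True bd by (auto simp: good_def algebra_simps)
      then show ?thesis by blast
    next
      case False
      then have "of_int (b + d) * \<alpha> - of_int (a + c) > 0" using ne by auto
      moreover have "(b + d) * c - (a + c) * d = 1" using g by (simp add: good_def algebra_simps)
      ultimately have "good \<alpha> (Suc m) (a + c) (b + d) c d"
        using g bd by (auto simp: good_def algebra_simps)
      then show ?thesis by blast
    qed
  qed
qed

lemma good_coprime: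
  assumes "b * c - a * d = (1::int)"
  shows "coprime a b"
proof (rule coprimeI)
  fix g assume "g dvd a" "g dvd b"
  then have "g dvd b * c - a * d" by simp
  then show "is_unit g" using assms by simp
qed

lemma quot_ab:
  assumes "0 < b" "coprime a b"
  shows "quotient_of (of_int a / of_int b) = (a, b)"
  using assms by (simp add: Fract_of_int_quotient[symmetric] quotient_of_Fract)

lemma farey_frac:
  assumes "0 < b" "coprime a b" "0 \<le> a" "a \<le> b" "b \<le> int m"
  shows "(of_int a / of_int b :: rat) \<in> farey m"
  using assms by (simp add: farey_def quot_ab)

lemma farey_between:
  assumes g: "good \<alpha> m a b c d" and r: "r \<in> farey m"
    and lt1: "of_int a / of_int b < r" and lt2: "r < of_int c / of_int d"
  shows False
proof -
  obtain u v where uv: "quotient_of r = (u, v)" by force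
  have v0: "v > 0" using uv quotient_of_denom_pos by blast
  have vm: "v \<le> int m" using r uv by (simp add: farey_def)
  have req: "r = of_int u / of_int v" using uv quotient_of_div by blast
  have b0: "(0::rat) < of_int b" "(0::rat) < of_int d" using g by (auto simp: good_def)
  have "of_int a / of_int b < (of_int u / of_int v :: rat)" using lt1 req by simp
  then have "of_int a * of_int v < (of_int u * of_int b :: rat)"
    using b0 v0 by (simp add: divide_simps)
  then have "a * v < u * b" by (metis of_int_less_iff of_int_mult)
  then have Y: "b * u - a * v \<ge> 1" by (simp add: mult.commute)
  have "(of_int u / of_int v :: rat) < of_int c / of_int d" using lt2 req by simp
  then have "of_int u * of_int d < (of_int c * of_int v :: rat)"
    using b0 v0 by (simp add: divide_simps)
  then have "u * d < c * v" by (metis of_int_less_iff of_int_mult)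
  then have X: "c * v - d * u \<ge> 1" by (simp add: mult.commute)
  have eq: "v = b * (c * v - d * u) + d * (b * u - a * v)"
  proof -
    have "b * (c * v - d * u) + d * (b * u - a * v) = v * (b * c - a * d)"
      by (simp add: algebra_simps)
    then show ?thesis using g by (simp add: good_def)
  qed
  have "b * (c * v - d * u) \<ge> b" using X g by (simp add: good_def)
  moreover have "d * (b * u - a * v) \<ge> d" using Y g by (simp add: good_def)
  ultimately have "v \<ge> b + d" using eq by linarith
  with vm g show False by (simp add: good_def)
qed

lemma hurwitz_good:
  assumes g: "good \<alpha> m a b c d"
  shows "hurwitz_pair \<alpha> m = (of_int a / of_int b, of_int c / of_int d)"
proof -
  define A :: rat where "A = of_int a / of_int b"
  define C :: rat where "C = of_int c / of_int d"
  have cop1: "coprime a b" using g by (intro good_coprime[of b c a d]) (simp add: good_def)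
  have cop2: "coprime c d"
  proof -
    have "d * (-a) - (-c) * b = 1" using g by (simp add: good_def algebra_simps)
    then have "coprime (-c) d" by (rule good_coprime)
    then show ?thesis by simp
  qed
  have r1: "A \<in> farey m" unfolding A_def
    by (rule farey_frac) (use g cop1 in \<open>auto simp: good_def\<close>)
  have r2: "C \<in> farey m" unfolding C_def
    by (rule farey_frac) (use g cop2 in \<open>auto simp: good_def\<close>)
  have a1: "of_rat A < \<alpha>" using g unfolding A_def
    by (simp add: of_rat_divide good_def divide_simps algebra_simps)
  have a2: "\<alpha> < of_rat C" using g unfolding C_def
    by (simp add: of_rat_divide good_def divide_simps algebra_simps)
  have nb: "\<not> (\<exists>e \<in> farey m. A < e \<and> e < C)"
    using farey_between[OF g] unfolding A_def C_def by blast
  show ?thesis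
    unfolding hurwitz_pair_def A_def[symmetric] C_def[symmetric]
  proof (rule the_equality)
    show "case (A, C) of (a, b) \<Rightarrow> a \<in> farey m \<and> b \<in> farey m \<and>
      of_rat a < \<alpha> \<and> \<alpha> < of_rat b \<and> \<not> (\<exists>c \<in> farey m. a < c \<and> c < b)"
      using r1 r2 a1 a2 nb by simp
  next
    fix x assume "case x of (a, b) \<Rightarrow> a \<in> farey m \<and> b \<in> farey m \<and>
      of_rat a < \<alpha> \<and> \<alpha> < of_rat b \<and> \<not> (\<exists>c \<in> farey m. a < c \<and> c < b)"
    then obtain r s where x: "x = (r, s)" and h: "r \<in> farey m" "s \<in> farey m"
      "of_rat r < \<alpha>" "\<alpha> < of_rat s" "\<not> (\<exists>c \<in> farey m. r < c \<and> c < s)"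
      by (cases x) auto
    have "r = A"
    proof (rule ccontr)
      assume "r \<noteq> A"
      then consider "r < A" | "A < r" by linarith
      then show False
      proof cases
        case 1
        have "A < s" using a1 h(4) by (metis of_rat_less order.strict_trans)
        then show False using 1 h(5) r1 by blast
      next
        case 2
        have "r < C" using a2 h(3) by (metis of_rat_less order.strict_trans)
        then show False using 2 nb h(1) by blast
      qed
    qed
    moreover have "s = C"
    proof (rule ccontr)
      assume "s \<noteq> C"
      then consider "s < C" | "C < s" by linarith
      then show False
      proof cases
        case 1
        have "A < s" using a1 h(4) by (metis of_rat_less order.strict_trans)
        then show False using 1 nb h(2) by blast
      next
        case 2
        have "r < C" using a2 h(3) by (metis of_rat_less order.strict_trans)
        then show False using 2 h(5) r2 by blast
      qed
    qed
    ultimately show "x = (A, C)" using x by simp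
  qed
qed


lemma xi_abs_eq:
  assumes irr: "\<alpha> \<notin> \<rat>" and eq: "\<bar>xi \<alpha> w\<bar> = \<bar>xi \<alpha> v\<bar>"
  shows "w = v \<or> w = (- fst v, - snd v)"
proof -
  obtain w1 w2 v1 v2 where w: "w = (w1, w2)" and v: "v = (v1, v2)" by force
  from eq have "xi \<alpha> w = xi \<alpha> v \<or> xi \<alpha> w = - xi \<alpha> v" by linarith
  then show ?thesis
  proof
    assume h: "xi \<alpha> w = xi \<alpha> v"
    then have h': "of_int (w1 - v1) * \<alpha> = of_int (v2 - w2)"
      by (simp add: xi_def w v algebra_simps)
    have "w1 - v1 = 0"
    proof (rule ccontr)
      assume "w1 - v1 \<noteq> 0"
      from irr_ne[OF irr this, of "v2 - w2"] h' show False by simp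
    qed
    then have "w1 = v1" by simp
    then have "w2 = v2" using h' by simp
    then show ?thesis using \<open>w1 = v1\<close> w v by simp
  next
    assume h: "xi \<alpha> w = - xi \<alpha> v"
    then have h': "of_int (w1 + v1) * \<alpha> = of_int (- v2 - w2)"
      by (simp add: xi_def w v algebra_simps)
    have "w1 + v1 = 0"
    proof (rule ccontr)
      assume "w1 + v1 \<noteq> 0"
      from irr_ne[OF irr this, of "- v2 - w2"] h' show False by simp
    qed
    then have "w1 = - v1" by simp
    then have "w2 = - v2" using h' by simp
    then show ?thesis using \<open>w1 = - v1\<close> w v by simp
  qed
qed

lemma mink_min_eq:
  assumes irr: "\<alpha> \<notin> \<rat>" and "P w" "sup_norm_le w m" "first_nonzero_pos w"
    and mn: "\<forall>v. P v \<and> sup_norm_le v m \<longrightarrow> \<bar>xi \<alpha> w\<bar> \<le> \<bar>xi \<alpha> v\<bar>"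
  shows "mink_min \<alpha> m P = w"
  unfolding mink_min_def
proof (rule the_equality)
  show "P w \<and> sup_norm_le w m \<and> first_nonzero_pos w \<and>
      (\<forall>v. P v \<and> sup_norm_le v m \<longrightarrow> \<bar>xi \<alpha> w\<bar> \<le> \<bar>xi \<alpha> v\<bar>)" using assms by blast
next
  fix w' assume h: "P w' \<and> sup_norm_le w' m \<and> first_nonzero_pos w' \<and>
      (\<forall>v. P v \<and> sup_norm_le v m \<longrightarrow> \<bar>xi \<alpha> w'\<bar> \<le> \<bar>xi \<alpha> v\<bar>)"
  then have "\<bar>xi \<alpha> w'\<bar> \<le> \<bar>xi \<alpha> w\<bar>" using assms(2,3) by blast
  moreover have "\<bar>xi \<alpha> w\<bar> \<le> \<bar>xi \<alpha> w'\<bar>" using mn h by blast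
  ultimately have "\<bar>xi \<alpha> w'\<bar> = \<bar>xi \<alpha> w\<bar>" by linarith
  then have "w' = w \<or> w' = (- fst w, - snd w)" by (rule xi_abs_eq[OF irr])
  then show "w' = w" using h assms(4) by (auto simp: first_nonzero_pos_def)
qed

lemma key:
  assumes g: "good \<alpha> m a b c d" and n: "sup_norm_le v m"
  shows "\<bar>xi \<alpha> v\<bar> = \<bar>of_int (c * fst v + d * snd v)\<bar> * (of_int b * \<alpha> - of_int a)
           + \<bar>of_int (- a * fst v - b * snd v)\<bar> * (of_int c - of_int d * \<alpha>)"
proof -
  obtain r1 r2 where v: "v = (r1, r2)" by force
  define x where "x = c * r1 + d * r2"
  define y where "y = - a * r1 - b * r2"
  define e where "e = of_int b * \<alpha> - of_int a"
  define f where "f = of_int d * \<alpha> - of_int c"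
  have e0: "e > 0" and f0: "f < 0" using g by (auto simp: good_def e_def f_def)
  have det: "b * c - a * d = 1" using g by (simp add: good_def)
  have r1: "r1 = x * b + y * d"
  proof -
    have "x * b + y * d = r1 * (b * c - a * d)" by (simp add: x_def y_def algebra_simps)
    then show ?thesis using det by simp
  qed
  have r2: "r2 = - (x * a + y * c)"
  proof -
    have "x * a + y * c = - r2 * (b * c - a * d)" by (simp add: x_def y_def algebra_simps)
    then show ?thesis using det by simp
  qed
  have xiv: "xi \<alpha> v = of_int x * e + of_int y * f"
  proof -
    have "xi \<alpha> v = of_int (x * b + y * d) * \<alpha> - of_int (x * a + y * c)"
      using r1 r2 by (simp add: xi_def v)
    also have "\<dots> = of_int x * e + of_int y * f" by (simp add: e_def f_def algebra_simps)
    finally show ?thesis .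
  qed
  have bd: "int m < b + d" "1 \<le> b" "1 \<le> d" using g by (auto simp: good_def)
  have r1m: "\<bar>r1\<bar> \<le> int m" using n by (simp add: sup_norm_le_def v)
  have nsame1: "\<not> (x > 0 \<and> y > 0)"
  proof
    assume "x > 0 \<and> y > 0"
    then have "x * b \<ge> b" "y * d \<ge> d" using bd by auto
    then show False using r1 r1m bd by linarith
  qed
  have nsame2: "\<not> (x < 0 \<and> y < 0)"
  proof
    assume "x < 0 \<and> y < 0"
    then have "(- x) * b \<ge> 1 * b" "(- y) * d \<ge> 1 * d"
      using bd mult_right_mono[of 1 "-x" b] mult_right_mono[of 1 "-y" d] by auto
    then have "x * b \<le> - b" "y * d \<le> - d" by simp_all
    then show False using r1 r1m bd by linarith
  qed
  have "\<bar>of_int x * e + of_int y * f\<bar> = \<bar>of_int x\<bar> * e + \<bar>of_int y\<bar> * (- f)"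
  proof (cases "x \<ge> 0 \<and> y \<le> 0")
    case True
    then have "y \<le> 0" "x \<ge> 0" by auto
    then have "of_int x * e \<ge> 0" "of_int y * f \<ge> 0" using True e0 f0
      by (auto intro: mult_nonneg_nonneg mult_nonpos_nonpos)
    then show ?thesis using \<open>x \<ge> 0\<close> \<open>y \<le> 0\<close> by (simp add: abs_of_nonneg abs_of_nonpos)
  next
    case False
    then have "y \<ge> 0" "x \<le> 0" using nsame1 nsame2 by linarith+
    then have "of_int x * e \<le> 0" "of_int y * f \<le> 0" using e0 f0
      by (auto simp: mult_nonpos_nonneg mult_nonneg_nonpos)
    then show ?thesis using \<open>x \<le> 0\<close> \<open>y \<ge> 0\<close> by (simp add: abs_of_nonneg abs_of_nonpos)
  qed
  then show ?thesis using xiv by (simp add: x_def y_def e_def f_def v)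
qed


lemma lb:
  assumes g: "good \<alpha> m a b c d" and n: "sup_norm_le v m"
  shows "c * fst v + d * snd v \<noteq> 0 \<Longrightarrow> \<bar>xi \<alpha> v\<bar> \<ge> of_int b * \<alpha> - of_int a"
    and "- a * fst v - b * snd v \<noteq> 0 \<Longrightarrow> \<bar>xi \<alpha> v\<bar> \<ge> of_int c - of_int d * \<alpha>"
proof -
  define X where "X = c * fst v + d * snd v"
  define Y where "Y = - a * fst v - b * snd v"
  define e where "e = of_int b * \<alpha> - of_int a"
  define f where "f = of_int c - of_int d * \<alpha>"
  have e0: "e > 0" and f0: "f > 0" using g by (auto simp: good_def e_def f_def)
  have k: "\<bar>xi \<alpha> v\<bar> = \<bar>of_int X\<bar> * e + \<bar>of_int Y\<bar> * f"
    using key[OF g n] by (simp add: X_def Y_def e_def f_def)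
  have t1: "\<bar>of_int X\<bar> * e \<ge> 0" "\<bar>of_int Y\<bar> * f \<ge> 0" using e0 f0 by auto
  {
    assume "c * fst v + d * snd v \<noteq> 0"
    then have "\<bar>of_int X\<bar> \<ge> (1::real)" unfolding X_def by linarith
    then have "\<bar>of_int X\<bar> * e \<ge> 1 * e" using e0 by (intro mult_right_mono) auto
    then show "\<bar>xi \<alpha> v\<bar> \<ge> of_int b * \<alpha> - of_int a" using k t1 e_def by linarith
  }
  {
    assume "- a * fst v - b * snd v \<noteq> 0"
    then have "\<bar>of_int Y\<bar> \<ge> (1::real)" unfolding Y_def by linarith
    then have "\<bar>of_int Y\<bar> * f \<ge> 1 * f" using f0 by (intro mult_right_mono) auto
    then show "\<bar>xi \<alpha> v\<bar> \<ge> of_int c - of_int d * \<alpha>" using k t1 f_def by linarith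
  }
qed

lemma nz:
  assumes "b * c - a * d = (1::int)" "v \<noteq> (0, 0)"
  shows "c * fst v + d * snd v \<noteq> 0 \<or> - a * fst v - b * snd v \<noteq> 0"
proof (rule ccontr)
  assume h: "\<not> ?thesis"
  have "b * (c * fst v + d * snd v) + d * (- a * fst v - b * snd v) = (b * c - a * d) * fst v"
    by (simp add: algebra_simps)
  then have 1: "fst v = 0" using h assms(1) by simp
  have "a * (c * fst v + d * snd v) + c * (- a * fst v - b * snd v) = - (b * c - a * d) * snd v"
    by (simp add: algebra_simps)
  then have 2: "snd v = 0" using h assms(1) by simp
  from 1 2 assms(2) show False by (simp add: prod_eq_iff)
qed

lemma mink_A_good:
  assumes irr: "\<alpha> \<notin> \<rat>" and g: "good \<alpha> m a b c d"
  shows "mink_A \<alpha> m = (if of_int b * \<alpha> - of_int a < of_int c - of_int d * \<alpha>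
           then ((b, - a), (d, - c)) else ((d, - c), (b, - a)))"
proof -
  have det: "b * c - a * d = 1" using g by (simp add: good_def)
  have nb: "sup_norm_le (b, - a) m" and nd: "sup_norm_le (d, - c) m"
    using g by (auto simp: good_def sup_norm_le_def)
  have pb: "first_nonzero_pos (b, - a)" and pd: "first_nonzero_pos (d, - c)"
    using g by (auto simp: good_def first_nonzero_pos_def)
  have xb: "\<bar>xi \<alpha> (b, - a)\<bar> = of_int b * \<alpha> - of_int a"
    using g by (simp add: good_def xi_def)
  have xd: "\<bar>xi \<alpha> (d, - c)\<bar> = of_int c - of_int d * \<alpha>"
    using g by (simp add: good_def xi_def)
  have b0: "(b, - a) \<noteq> (0, 0)" "(d, - c) \<noteq> (0, 0)" using g by (auto simp: good_def)
  show ?thesis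
  proof (cases "of_int b * \<alpha> - of_int a < of_int c - of_int d * \<alpha>")
    case True
    have w1: "mink_w1 \<alpha> m = (b, - a)" unfolding mink_w1_def
    proof (rule mink_min_eq[OF irr _ nb pb])
      show "(b, - a) \<noteq> (0, 0)" by (rule b0)
      show "\<forall>v. v \<noteq> (0, 0) \<and> sup_norm_le v m \<longrightarrow> \<bar>xi \<alpha> (b, - a)\<bar> \<le> \<bar>xi \<alpha> v\<bar>"
      proof (intro allI impI)
        fix v assume "v \<noteq> (0, 0) \<and> sup_norm_le v m"
        then have "v \<noteq> (0, 0)" "sup_norm_le v m" by auto
        from nz[OF det this(1)] show "\<bar>xi \<alpha> (b, - a)\<bar> \<le> \<bar>xi \<alpha> v\<bar>"
        proof
          assume "c * fst v + d * snd v \<noteq> 0"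
          from lb(1)[OF g \<open>sup_norm_le v m\<close> this] show ?thesis using xb by linarith
        next
          assume "- a * fst v - b * snd v \<noteq> 0"
          from lb(2)[OF g \<open>sup_norm_le v m\<close> this] show ?thesis using xb True by linarith
        qed
      qed
    qed
    have w2: "mink_w2 \<alpha> m = (d, - c)" unfolding mink_w2_def Let_def w1
    proof (rule mink_min_eq[OF irr _ nd pd])
      show "fst (b, - a) * snd (d, - c) - snd (b, - a) * fst (d, - c) \<noteq> 0"
        using det by (simp add: algebra_simps)
      show "\<forall>v. fst (b, - a) * snd v - snd (b, - a) * fst v \<noteq> 0 \<and> sup_norm_le v m \<longrightarrow>
          \<bar>xi \<alpha> (d, - c)\<bar> \<le> \<bar>xi \<alpha> v\<bar>"
      proof (intro allI impI)
        fix v assume h: "fst (b, - a) * snd v - snd (b, - a) * fst v \<noteq> 0 \<and> sup_norm_le v m"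
        then have "- a * fst v - b * snd v \<noteq> 0" by (simp add: algebra_simps)
        then show "\<bar>xi \<alpha> (d, - c)\<bar> \<le> \<bar>xi \<alpha> v\<bar>"
          using lb(2)[OF g _ \<open>- a * fst v - b * snd v \<noteq> 0\<close>] h xd by linarith
      qed
    qed
    show ?thesis using True w1 w2 by (simp add: mink_A_def)
  next
    case False
    have w1: "mink_w1 \<alpha> m = (d, - c)" unfolding mink_w1_def
    proof (rule mink_min_eq[OF irr _ nd pd])
      show "(d, - c) \<noteq> (0, 0)" by (rule b0)
      show "\<forall>v. v \<noteq> (0, 0) \<and> sup_norm_le v m \<longrightarrow> \<bar>xi \<alpha> (d, - c)\<bar> \<le> \<bar>xi \<alpha> v\<bar>"
      proof (intro allI impI)
        fix v assume "v \<noteq> (0, 0) \<and> sup_norm_le v m"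
        then have "v \<noteq> (0, 0)" "sup_norm_le v m" by auto
        from nz[OF det this(1)] show "\<bar>xi \<alpha> (d, - c)\<bar> \<le> \<bar>xi \<alpha> v\<bar>"
        proof
          assume "c * fst v + d * snd v \<noteq> 0"
          from lb(1)[OF g \<open>sup_norm_le v m\<close> this] show ?thesis using xd False by linarith
        next
          assume "- a * fst v - b * snd v \<noteq> 0"
          from lb(2)[OF g \<open>sup_norm_le v m\<close> this] show ?thesis using xd by linarith
        qed
      qed
    qed
    have w2: "mink_w2 \<alpha> m = (b, - a)" unfolding mink_w2_def Let_def w1
    proof (rule mink_min_eq[OF irr _ nb pb])
      show "fst (d, - c) * snd (b, - a) - snd (d, - c) * fst (b, - a) \<noteq> 0"
        using det by (simp add: algebra_simps)
      show "\<forall>v. fst (d, - c) * snd v - snd (d, - c) * fst v \<noteq> 0 \<and> sup_norm_le v m \<longrightarrow>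
          \<bar>xi \<alpha> (b, - a)\<bar> \<le> \<bar>xi \<alpha> v\<bar>"
      proof (intro allI impI)
        fix v assume h: "fst (d, - c) * snd v - snd (d, - c) * fst v \<noteq> 0 \<and> sup_norm_le v m"
        then have "c * fst v + d * snd v \<noteq> 0" by (simp add: algebra_simps)
        then show "\<bar>xi \<alpha> (b, - a)\<bar> \<le> \<bar>xi \<alpha> v\<bar>"
          using lb(1)[OF g _ \<open>c * fst v + d * snd v \<noteq> 0\<close>] h xb by linarith
      qed
    qed
    show ?thesis using False w1 w2 by (simp add: mink_A_def)
  qed
qed


lemma good_props:
  assumes g: "good \<alpha> m a b c d"
  shows "quotient_of (of_int a / of_int b) = (a, b)" "quotient_of (of_int c / of_int d) = (c, d)"
    "(of_int a / of_int b :: rat) < of_int c / of_int d"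
proof -
  have cop1: "coprime a b" using g by (intro good_coprime[of b c a d]) (simp add: good_def)
  have "d * (-a) - (-c) * b = 1" using g by (simp add: good_def algebra_simps)
  then have "coprime (-c) d" by (rule good_coprime)
  then have cop2: "coprime c d" by simp
  show "quotient_of (of_int a / of_int b) = (a, b)" using cop1 g by (intro quot_ab) (auto simp: good_def)
  show "quotient_of (of_int c / of_int d) = (c, d)" using cop2 g by (intro quot_ab) (auto simp: good_def)
  have "b * c - a * d = 1" "b > 0" "d > 0" using g by (auto simp: good_def)
  then have "a * d < c * b" by (simp add: algebra_simps)
  then have "(of_int a * of_int d :: rat) < of_int c * of_int b" by (metis of_int_less_iff of_int_mult)
  then show "(of_int a / of_int b :: rat) < of_int c / of_int d"
    using \<open>b > 0\<close> \<open>d > 0\<close> by (simp add: divide_simps)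
qed

lemma rel1:
  assumes "0 < \<alpha>" "\<alpha> < 1" and irr: "\<alpha> \<notin> \<rat>" and "1 \<le> m"
    and A: "mink_A \<alpha> m = ((q, - p), (q', - p'))"
  shows "hurwitz_pair \<alpha> m = (of_int p / of_int q, of_int p' / of_int q')
       \<or> hurwitz_pair \<alpha> m = (of_int p' / of_int q', of_int p / of_int q)"
proof -
  obtain a b c d where g: "good \<alpha> m a b c d" using good_ex assms by blast
  show ?thesis using A mink_A_good[OF irr g] hurwitz_good[OF g] by (auto split: if_splits)
qed

lemma rel2:
  assumes "0 < \<alpha>" "\<alpha> < 1" and irr: "\<alpha> \<notin> \<rat>" and "1 \<le> m"
  shows "fst (hurwitz_pair \<alpha> m) < snd (hurwitz_pair \<alpha> m)"
    and "int m < snd (quotient_of (fst (hurwitz_pair \<alpha> m))) + snd (quotient_of (snd (hurwitz_pair \<alpha> m)))"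
proof -
  obtain a b c d where g: "good \<alpha> m a b c d" using good_ex assms by blast
  show "fst (hurwitz_pair \<alpha> m) < snd (hurwitz_pair \<alpha> m)"
    using hurwitz_good[OF g] good_props[OF g] by simp
  show "int m < snd (quotient_of (fst (hurwitz_pair \<alpha> m))) + snd (quotient_of (snd (hurwitz_pair \<alpha> m)))"
    using hurwitz_good[OF g] good_props[OF g] g by (simp add: good_def)
qed

lemma rel3:
  assumes "0 < \<alpha>" "\<alpha> < 1" and irr: "\<alpha> \<notin> \<rat>" and "1 \<le> m" "1 \<le> m'"
  shows "mink_A \<alpha> m = mink_A \<alpha> m' \<longleftrightarrow> hurwitz_pair \<alpha> m = hurwitz_pair \<alpha> m'"
proof
  assume h: "hurwitz_pair \<alpha> m = hurwitz_pair \<alpha> m'"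
  obtain a b c d where g: "good \<alpha> m a b c d" using good_ex assms by blast
  obtain a' b' c' d' where g': "good \<alpha> m' a' b' c' d'" using good_ex assms by blast
  have e1: "(of_int a / of_int b :: rat) = of_int a' / of_int b'"
   and e2: "(of_int c / of_int d :: rat) = of_int c' / of_int d'"
    using h hurwitz_good[OF g] hurwitz_good[OF g'] by auto
  have "(a, b) = (a', b')" using good_props(1)[OF g] good_props(1)[OF g'] e1 by metis
  moreover have "(c, d) = (c', d')" using good_props(2)[OF g] good_props(2)[OF g'] e2 by metis
  ultimately show "mink_A \<alpha> m = mink_A \<alpha> m'"
    using mink_A_good[OF irr g] mink_A_good[OF irr g'] by simp
next
  assume h: "mink_A \<alpha> m = mink_A \<alpha> m'"
  obtain q p q' p' where M: "mink_A \<alpha> m = ((q, - p), (q', - p'))"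
    by (metis prod.collapse minus_minus)
  have M': "mink_A \<alpha> m' = ((q, - p), (q', - p'))" using h M by simp
  note r1 = rel1[OF assms(1-4) M] rel1[OF assms(1-3,5) M']
  note r2 = rel2(1)[OF assms(1-4)] rel2(1)[OF assms(1-3,5)]
  show "hurwitz_pair \<alpha> m = hurwitz_pair \<alpha> m'"
    using r1 r2 by auto
qed


lemma ni_eq:
  assumes "0 < \<alpha>" "\<alpha> < 1" and irr: "\<alpha> \<notin> \<rat>"
  shows "new_indices (mink_A \<alpha>) = new_indices (hurwitz_pair \<alpha>)"
  unfolding new_indices_def
proof (rule Collect_cong)
  fix m
  show "(1 \<le> m \<and> mink_A \<alpha> m \<notin> mink_A \<alpha> ` {1..<m}) =
        (1 \<le> m \<and> hurwitz_pair \<alpha> m \<notin> hurwitz_pair \<alpha> ` {1..<m})"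
  proof (cases "1 \<le> m")
    case True
    have "(\<exists>j\<in>{1..<m}. mink_A \<alpha> m = mink_A \<alpha> j) \<longleftrightarrow>
          (\<exists>j\<in>{1..<m}. hurwitz_pair \<alpha> m = hurwitz_pair \<alpha> j)"
      using rel3[OF assms True] by auto
    then show ?thesis by (auto simp: image_iff)
  qed simp
qed

lemma ni_inf:
  assumes "0 < \<alpha>" "\<alpha> < 1" and irr: "\<alpha> \<notin> \<rat>"
  shows "infinite (new_indices (hurwitz_pair \<alpha>))"
proof
  define H where "H = hurwitz_pair \<alpha>"
  define N where "N = new_indices H"
  assume fin: "finite (new_indices (hurwitz_pair \<alpha>))"
  then have finN: "finite N" by (simp add: N_def H_def)
  have inN: "H m \<in> H ` N" if m: "1 \<le> m" for m
  proof -
    define j where "j = (LEAST j. 1 \<le> j \<and> H j = H m)"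
    have j: "1 \<le> j \<and> H j = H m" unfolding j_def by (rule LeastI[of _ m]) (use m in auto)
    have "j \<in> N"
    proof -
      have "H j \<notin> H ` {1..<j}"
      proof
        assume "H j \<in> H ` {1..<j}"
        then obtain i where i: "1 \<le> i" "i < j" "H i = H j" by auto
        then have "1 \<le> i \<and> H i = H m" using j by simp
        then have "j \<le> i" unfolding j_def by (rule Least_le)
        with i show False by simp
      qed
      then show ?thesis using j by (simp add: N_def new_indices_def)
    qed
    then show ?thesis using j by (metis image_eqI)
  qed
  define den where "den = (\<lambda>x :: rat \<times> rat. snd (quotient_of (fst x)) + snd (quotient_of (snd x)))"
  define M where "M = Max (insert 0 (den ` H ` N))"
  have fD: "finite (insert 0 (den ` H ` N))" using finN by simp
  define m where "m = nat M + 1"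
  have m1: "1 \<le> m" by (simp add: m_def)
  have "den (H m) \<in> insert 0 (den ` H ` N)" using inN[OF m1] by auto
  then have "den (H m) \<le> M" unfolding M_def using fD by (rule Max_ge[rotated])
  moreover have "int m < den (H m)" using rel2(2)[OF assms m1] by (simp add: den_def H_def)
  moreover have "M < int m" by (simp add: m_def)
  ultimately show False by linarith
qed

theorem theorem1:
  fixes \<alpha> :: real and k :: nat and p q p' q' :: int
  assumes "0 < \<alpha>" and "\<alpha> < 1" and "\<alpha> \<notin> \<rat>"
    and "1 \<le> k"
    and "minkowski_chain \<alpha> k = ((q, - p), (q', - p'))"
  shows "hurwitz_chain \<alpha> k = (of_int p / of_int q, of_int p' / of_int q')
       \<or> hurwitz_chain \<alpha> k = (of_int p' / of_int q', of_int p / of_int q)"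
proof -
  define N where "N = new_indices (hurwitz_pair \<alpha>)"
  define j where "j = enumerate N (k - 1)"
  have "j \<in> N" unfolding j_def N_def by (rule enumerate_in_set[OF ni_inf[OF assms(1-3)]])
  then have j1: "1 \<le> j" by (simp add: N_def new_indices_def)
  have "mink_A \<alpha> j = ((q, - p), (q', - p'))"
    using assms(5) ni_eq[OF assms(1-3)]
    by (simp add: minkowski_chain_def distinct_chain_def j_def N_def)
  from rel1[OF assms(1-3) j1 this] show ?thesis
    by (simp add: hurwitz_chain_def distinct_chain_def j_def N_def)
qed

end
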